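(* Assume $0<\underline{d}_w<\overline{d}_w\le L\cos(\underline{\theta}_w)<L/\cos(\underline{\theta}_w)$, where $\underline{\theta}_w\in(0,\pi/2)$, and consider $$\max_{P,d_w,\theta_w}\ \gamma_b(P,d_w,\theta_w)\quad\text{s.t.}\quad \mathcal{D}_{01}(P,d_w,\theta_w)\le2\epsilon^2,\ \ 0<P\le P_m,\ \ \underline{d}_w\le d_w\le\overline{d}_w,\ \ \underline{\theta}_w\le\theta_w\le\frac{\pi}{2}.$$ Let $\theta_w^\circ(\overline{d}_w)$ be the (unique) maximizer of $\theta_w\mapsto\gamma_b(P,\overline{d}_w,\theta_w)$ over $\theta_w\in[0,\pi/2]$ without constraints (it does not depend on $P>0$). Let $P^{\epsilon}$ be the unique value of $P$ with $\mathcal{D}_{01}(P,\overline{d}_w,\underline{\theta}_w)=2\epsilon^2$, let $\theta_w^{\epsilon}$ be the unique solution in $\theta_w$ of $\mathcal{D}_{01}(P_m,\overline{d}_w,\theta_w)=2\epsilon^2$, and let $(P^j,\theta_w^j)$ be the unique maximizer of $$\max_{P,\theta_w}\ \gamma_b(P,\overline{d}_w,\theta_w)\quad\text{s.t.}\quad \mathcal{D}_{01}(P,\overline{d}_w,\theta_w)=2\epsilon^2,\ \ P\le P_m,\ \ \max\{\underline{\theta}_w,\theta_w^{\epsilon}\}\le\theta_w\le\theta_w^\circ(\overline{d}_w).$$ Then the optimal solution $(d_w^\ast,\theta_w^\ast,P^\ast)$ of the original problem is: (A) $(\overline{d}_w,\underline{\theta}_w,P_m)$ if $\theta_w^\circ(\overline{d}_w)<\underline{\theta}_w$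 and $\mathcal{D}_{01}(P_m,\overline{d}_w,\underline{\theta}_w)\le2\epsilon^2$; (B) $(\overline{d}_w,\underline{\theta}_w,P^{\epsilon})$ if $\theta_w^\circ(\overline{d}_w)<\underline{\theta}_w$ and $\mathcal{D}_{01}(P_m,\overline{d}_w,\underline{\theta}_w)>2\epsilon^2$; (C) $(\overline{d}_w,\theta_w^\circ(\overline{d}_w),P_m)$ if $\underline{\theta}_w\le\theta_w^\circ(\overline{d}_w)\le\arccos(\overline{d}_w/L)$ and $\mathcal{D}_{01}(P_m,\overline{d}_w,\theta_w^\circ(\overline{d}_w))\le2\epsilon^2$; (D) $(\overline{d}_w,\theta_w^j,P^j)$ if $\underline{\theta}_w\le\theta_w^\circ(\overline{d}_w)\le\arccos(\overline{d}_w/L)$ and $\mathcal{D}_{01}(P_m,\overline{d}_w,\theta_w^\circ(\overline{d}_w))>2\epsilon^2$.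
   Context: Setting: Willie and Bob are ground points at distance $L>0$; a UAV lies in the vertical plane through them, on Bob's side, at distance $d_w>0$ from Willie and at elevation angle $\theta_w\in[0,\pi/2]$ (radians) seen from Willie, and transmits with power $P$. Constants: $\xi_{\mathrm{L}}<0$, $\xi_{\mathrm{N}}<0$; $a,b>0$; $\sigma_b^2,\sigma_w^2>0$; $n\in\mathbb{N}$; $\epsilon>0$; $P_m>0$. Define $d_b=\sqrt{L^2+d_w^2-2d_wL\cos(\theta_w)}$, $$p_b=\frac{1}{1+a\exp\!\left(-b\left[\frac{180}{\pi}\arcsin\!\left(\frac{d_w\sin\theta_w}{d_b}\right)-a\right]\right)},\qquad p_w=\frac{1}{1+a\exp\!\left(-b\left[\frac{180}{\pi}\theta_w-a\right]\right)},$$ $f(d_w,\theta_w)=d_b^{\xi_{\mathrm{L}}}p_b$, and $\gamma_b(P,d_w,\theta_w)=Pf(d_w,\theta_w)/\sigma_b^2$. With $\bar P=P d_w^{\xi_{\mathrm{L}}}p_w+P d_w^{\xi_{\mathrm{N}}}$, define $$\mathcal{D}_{01}(P,d_w,\theta_w)=\frac{n}{2}\left[\ln\!\left(\frac{\bar P+\sigma_w^2}{\sigma_w^2}\right)-\frac{\bar P}{\bar P+\sigma_w^2}\right].$$ *)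

theory Defs
  imports Complex_Main
begin

text \<open>Parameters are passed explicitly:
  L (Willie--Bob distance), a b (LoS probability constants), xiL xiN (path-loss
  exponents), sb2 = sigma_b^2, sw2 = sigma_w^2, n (number of channel uses).\<close>

definition d_b :: "real \<Rightarrow> real \<Rightarrow> real \<Rightarrow> real" where
  "d_b L dw th = sqrt (L\<^sup>2 + dw\<^sup>2 - 2 * dw * L * cos th)"

definition p_b :: "real \<Rightarrow> real \<Rightarrow> real \<Rightarrow> real \<Rightarrow> real \<Rightarrow> real" where
  "p_b a b L dw th =
     1 / (1 + a * exp (- b * ((180 / pi) * arcsin (dw * sin th / d_b L dw th) - a)))"

definition p_w :: "real \<Rightarrow> real \<Rightarrow> real \<Rightarrow> real" where
  "p_w a b th = 1 / (1 + a * exp (- b * ((180 / pi) * th - a)))"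

definition f_gain :: "real \<Rightarrow> real \<Rightarrow> real \<Rightarrow> real \<Rightarrow> real \<Rightarrow> real \<Rightarrow> real" where
  "f_gain a b xiL L dw th = d_b L dw th powr xiL * p_b a b L dw th"

definition gamma_b ::
  "real \<Rightarrow> real \<Rightarrow> real \<Rightarrow> real \<Rightarrow> real \<Rightarrow> real \<Rightarrow> real \<Rightarrow> real \<Rightarrow> real" where
  "gamma_b a b xiL L sb2 P dw th = P * f_gain a b xiL L dw th / sb2"

definition Pbar :: "real \<Rightarrow> real \<Rightarrow> real \<Rightarrow> real \<Rightarrow> real \<Rightarrow> real \<Rightarrow> real \<Rightarrow> real" where
  "Pbar a b xiL xiN P dw th = P * dw powr xiL * p_w a b th + P * dw powr xiN"

definition D01 ::
  "real \<Rightarrow> real \<Rightarrow> real \<Rightarrow> real \<Rightarrow> real \<Rightarrow> nat \<Rightarrow> real \<Rightarrow> real \<Rightarrow> real \<Rightarrow> real" where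
  "D01 a b xiL xiN sw2 n P dw th =
     (let Q = Pbar a b xiL xiN P dw th in
       real n / 2 * (ln ((Q + sw2) / sw2) - Q / (Q + sw2)))"

end

theory Submission
  imports Defs
begin


lemma db_sq_pos:
  fixes L r s :: real assumes "0 < r" "r < L"
  shows "0 < L\<^sup>2 + r\<^sup>2 - 2 * r * L * cos s"
proof -
  have "L\<^sup>2 + r\<^sup>2 - 2 * r * L * cos s \<ge> (L - r)\<^sup>2"
    using cos_le_one[of s] assms by (simp add: power2_eq_square algebra_simps)
  moreover have "(L - r)\<^sup>2 > 0" using assms by simp
  ultimately show ?thesis by linarith
qed

lemma db_pos: "0 < r \<Longrightarrow> r < L \<Longrightarrow> 0 < d_b L r s"
  unfolding d_b_def using db_sq_pos by simp

lemma db_sq: "0 < r \<Longrightarrow> r < L \<Longrightarrow> (d_b L r s)\<^sup>2 = L\<^sup>2 + r\<^sup>2 - 2 * r * L * cos s"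
  unfolding d_b_def using db_sq_pos[of r L s] by simp

lemma deriv_u: "((\<lambda>s. L\<^sup>2 + r\<^sup>2 - 2 * r * L * cos s) has_real_derivative 2 * r * L * sin s) (at s)"
  by (auto intro!: derivative_eq_intros)

lemma deriv_db:
  assumes "0 < r" "r < L"
  shows "((d_b L r) has_real_derivative (r * L * sin s / d_b L r s)) (at s)"
proof -
  have p: "0 < L\<^sup>2 + r\<^sup>2 - 2 * r * L * cos s" using db_sq_pos assms by blast
  have "((\<lambda>s. sqrt (L\<^sup>2 + r\<^sup>2 - 2 * r * L * cos s)) has_real_derivative
     (inverse (sqrt (L\<^sup>2 + r\<^sup>2 - 2 * r * L * cos s)) / 2) * (2 * r * L * sin s)) (at s)"
    by (rule DERIV_chain2[OF DERIV_real_sqrt[OF p] deriv_u])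
  then show ?thesis unfolding d_b_def[abs_def] by (simp add: field_simps)
qed

lemma z_sq:
  assumes "0 < r" "r < L"
  shows "1 - (r * sin s / d_b L r s)\<^sup>2 = ((L - r * cos s) / d_b L r s)\<^sup>2"
proof -
  have d: "d_b L r s > 0" using db_pos assms by blast
  have "(d_b L r s)\<^sup>2 = L\<^sup>2 + r\<^sup>2 - 2 * r * L * cos s" using db_sq assms by blast
  moreover have "(sin s)\<^sup>2 = 1 - (cos s)\<^sup>2" by (simp add: sin_squared_eq)
  have s3: "sin s * sin s = 1 - cos s * cos s" using sin_squared_eq[of s] by (simp add: power2_eq_square)
  ultimately show ?thesis using d by (simp add: field_simps power2_eq_square s3)
qed

lemma Lrc_pos: "0 < (r::real) \<Longrightarrow> r < L \<Longrightarrow> 0 < L - r * cos s"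
proof -
  assume a: "0 < r" "r < L"
  have "r * cos s \<le> r" using cos_le_one[of s] a by (simp add: mult_left_le)
  then show ?thesis using a by linarith
qed

lemma z_bound:
  assumes "0 < r" "r < L"
  shows "\<bar>r * sin s / d_b L r s\<bar> < 1"
proof -
  have d: "d_b L r s > 0" using db_pos assms by blast
  have "1 - (r * sin s / d_b L r s)\<^sup>2 > 0" unfolding z_sq[OF assms] using Lrc_pos[OF assms, of s] d by simp
  then show ?thesis by (simp add: abs_square_less_1)
qed

lemma alg2:
  fixes d c S r L :: real
  assumes "d > 0" "d\<^sup>2 = L\<^sup>2 + r\<^sup>2 - 2 * r * L * c" "S\<^sup>2 = 1 - c\<^sup>2"
  shows "(r * c * d - r * S * (r * L * S / d)) / d\<^sup>2 = r * (L * c - r) * (L - r * c) / d ^ 3"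
proof -
  have "(r * c * d - r * S * (r * L * S / d)) / d\<^sup>2 = r * (c * d\<^sup>2 - r * L * S\<^sup>2) / d ^ 3"
    using assms(1) by (simp add: field_simps power2_eq_square power3_eq_cube)
  also have "c * d\<^sup>2 - r * L * S\<^sup>2 = (L * c - r) * (L - r * c)"
    unfolding assms(2,3) by (simp add: algebra_simps power2_eq_square)
  finally show ?thesis by simp
qed

lemma deriv_z:
  assumes "0 < r" "r < L"
  shows "((\<lambda>s. r * sin s / d_b L r s) has_real_derivative
      r * (L * cos s - r) * (L - r * cos s) / (d_b L r s) ^ 3) (at s)"
proof -
  have d: "d_b L r s > 0" using db_pos assms by blast
  have sq: "(d_b L r s)\<^sup>2 = L\<^sup>2 + r\<^sup>2 - 2 * r * L * cos s" using db_sq assms by blast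
  have s2: "(sin s)\<^sup>2 = 1 - (cos s)\<^sup>2" by (simp add: sin_squared_eq)
  have "((\<lambda>s. r * sin s / d_b L r s) has_real_derivative
      (r * cos s * d_b L r s - r * sin s * (r * L * sin s / d_b L r s)) / (d_b L r s)\<^sup>2) (at s)"
    using DERIV_divide[OF DERIV_cmult[OF DERIV_sin[of s], of r] deriv_db[OF assms]] d
    by (simp add: power2_eq_square)
  moreover have "(r * cos s * d_b L r s - r * sin s * (r * L * sin s / d_b L r s)) / (d_b L r s)\<^sup>2
     = r * (L * cos s - r) * (L - r * cos s) / (d_b L r s) ^ 3"
    using alg2[OF d sq s2] .
  ultimately show ?thesis by simp
qed

lemma alg1: "(X::real) \<noteq> 0 \<Longrightarrow> d > 0 \<Longrightarrow> inverse (X / d) * (R * X / d ^ 3) = R / d\<^sup>2"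
  by (simp add: field_simps power2_eq_square power3_eq_cube)

lemma deriv_phi:
  assumes "0 < r" "r < L"
  shows "((\<lambda>s. arcsin (r * sin s / d_b L r s)) has_real_derivative
      r * (L * cos s - r) / (d_b L r s)\<^sup>2) (at s)"
proof -
  have d: "d_b L r s > 0" using db_pos assms by blast
  have c: "0 < L - r * cos s" using Lrc_pos assms by blast
  have zb: "-1 < r * sin s / d_b L r s" "r * sin s / d_b L r s < 1" using z_bound[OF assms, of s] by linarith+
  have sq: "sqrt (1 - (r * sin s / d_b L r s)\<^sup>2) = (L - r * cos s) / d_b L r s"
    unfolding z_sq[OF assms] using c d by simp
  have "((\<lambda>s. arcsin (r * sin s / d_b L r s)) has_real_derivative
      inverse (sqrt (1 - (r * sin s / d_b L r s)\<^sup>2)) * (r * (L * cos s - r) * (L - r * cos s) / (d_b L r s) ^ 3)) (at s)"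
    by (rule DERIV_chain2[OF DERIV_arcsin[OF zb] deriv_z[OF assms]])
  moreover have "inverse ((L - r * cos s) / d_b L r s) * (r * (L * cos s - r) * (L - r * cos s) / (d_b L r s) ^ 3)
     = r * (L * cos s - r) / (d_b L r s)\<^sup>2"
    using alg1[of "L - r * cos s" "d_b L r s" "r * (L * cos s - r)"] c d by simp
  ultimately show ?thesis unfolding sq by (simp only:)
qed

definition phi_e :: "real \<Rightarrow> real \<Rightarrow> real \<Rightarrow> real" where
  "phi_e L r s = arcsin (r * sin s / d_b L r s)"

definition w_e :: "real \<Rightarrow> real \<Rightarrow> real \<Rightarrow> real \<Rightarrow> real \<Rightarrow> real" where
  "w_e a b L r s = a * exp (- b * ((180 / pi) * phi_e L r s - a))"

definition q_e :: "real \<Rightarrow> real \<Rightarrow> real \<Rightarrow> real \<Rightarrow> real \<Rightarrow> real" where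
  "q_e a b L r s = b * (180 / pi) * w_e a b L r s / (1 + w_e a b L r s)"

definition F_e :: "real \<Rightarrow> real \<Rightarrow> real \<Rightarrow> real \<Rightarrow> real \<Rightarrow> real \<Rightarrow> real" where
  "F_e a b xi L r s = xi * L * sin s + q_e a b L r s * (L * cos s - r)"

lemma pb_w: "p_b a b L r s = 1 / (1 + w_e a b L r s)"
  unfolding p_b_def w_e_def phi_e_def by simp

lemma deriv_w:
  assumes "0 < r" "r < L"
  shows "((w_e a b L r) has_real_derivative
     w_e a b L r s * (- b * ((180 / pi) * (r * (L * cos s - r) / (d_b L r s)\<^sup>2)))) (at s)"
proof -
  have "((\<lambda>s. a * exp (- b * ((180 / pi) * phi_e L r s - a))) has_real_derivative
     a * (exp (- b * ((180 / pi) * phi_e L r s - a)) * (- b * ((180 / pi) * (r * (L * cos s - r) / (d_b L r s)\<^sup>2) - 0)))) (at s)"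
    unfolding phi_e_def
    by (intro DERIV_cmult DERIV_chain2[OF DERIV_exp] DERIV_diff DERIV_const deriv_phi[OF assms])
  then show ?thesis unfolding w_e_def[abs_def] by (simp add: mult.assoc)
qed

lemma gen3: "(D::real) \<noteq> 0 \<Longrightarrow> V \<noteq> 0 \<Longrightarrow> (E * (1 / V) * r / D) * (A + B / V) = E * r * A / (D * V) + E * r * B / (D * V * V)"
  by (simp add: field_simps)
lemma gen1: "(d::real) \<noteq> 0 \<Longrightarrow> V \<noteq> 0 \<Longrightarrow> E * (0 * ln d + (r * L * S / d) * xi / d) * (1 / V) = E * r * (xi * L * S) / (d\<^sup>2 * V)"
  by (simp add: field_simps power2_eq_square)
lemma gen2: "(D::real) \<noteq> 0 \<Longrightarrow> V \<noteq> 0 \<Longrightarrow> (0 * V - 1 * (0 + W * (- b * (k * (r * X / D))))) / (V * V) * E = E * r * (b * k * W * X) / (D * V * V)"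
  by (simp add: field_simps)
lemma alg3:
  fixes E W d xi r L c S b k :: real
  assumes "d > 0" "W > 0"
  shows "E * (0 * ln d + (r * L * S / d) * xi / d) * (1 / (1 + W)) + (0 * (1 + W) - 1 * (0 + W * (- b * (k * (r * (L * c - r) / d\<^sup>2))))) / ((1 + W) * (1 + W)) * E
     = (E * (1 / (1 + W)) * r / d\<^sup>2) * (xi * L * S + b * k * W / (1 + W) * (L * c - r))"
proof -
  have V: "1 + W \<noteq> 0" "d \<noteq> 0" "d\<^sup>2 \<noteq> 0" using assms by auto
  have e: "b * k * W / (1 + W) * (L * c - r) = (b * k * W * (L * c - r)) / (1 + W)" by simp
  show ?thesis unfolding gen1[OF V(2,1)] gen2[OF V(3,1)] e gen3[OF V(3,1)] ..
qed
lemma deriv_f: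
  assumes "0 < r" "r < L" "0 < a"
  shows "((f_gain a b xi L r) has_real_derivative
     (d_b L r s powr xi * p_b a b L r s * r / (d_b L r s)\<^sup>2) * F_e a b xi L r s) (at s)"
proof -
  have d: "d_b L r s > 0" using db_pos assms by blast
  have W: "w_e a b L r s > 0" unfolding w_e_def using assms by simp
  have W1: "1 + w_e a b L r s \<noteq> 0" using W by simp
  have h1: "((\<lambda>s. d_b L r s powr xi) has_real_derivative
      d_b L r s powr xi * (0 * ln (d_b L r s) + (r * L * sin s / d_b L r s) * xi / d_b L r s)) (at s)"
    by (rule DERIV_powr[OF deriv_db[OF assms(1,2)] d DERIV_const])
  have h2: "((\<lambda>s. 1 / (1 + w_e a b L r s)) has_real_derivative
      (0 * (1 + w_e a b L r s) - 1 * (0 + w_e a b L r s * (- b * ((180 / pi) * (r * (L * cos s - r) / (d_b L r s)\<^sup>2)))))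
        / ((1 + w_e a b L r s) * (1 + w_e a b L r s))) (at s)"
    by (rule DERIV_divide[OF DERIV_const DERIV_add[OF DERIV_const deriv_w[OF assms(1,2)]] W1])
  have fe: "f_gain a b xi L r = (\<lambda>s. d_b L r s powr xi * (1 / (1 + w_e a b L r s)))"
    unfolding f_gain_def[abs_def] pb_w by simp
  have D: "((f_gain a b xi L r) has_real_derivative
      d_b L r s powr xi * (0 * ln (d_b L r s) + (r * L * sin s / d_b L r s) * xi / d_b L r s) * (1 / (1 + w_e a b L r s))
      + (0 * (1 + w_e a b L r s) - 1 * (0 + w_e a b L r s * (- b * ((180 / pi) * (r * (L * cos s - r) / (d_b L r s)\<^sup>2)))))
        / ((1 + w_e a b L r s) * (1 + w_e a b L r s)) * d_b L r s powr xi) (at s)"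
    unfolding fe by (rule DERIV_mult[OF h1 h2])
  have eq: "d_b L r s powr xi * (0 * ln (d_b L r s) + (r * L * sin s / d_b L r s) * xi / d_b L r s) * (1 / (1 + w_e a b L r s))
      + (0 * (1 + w_e a b L r s) - 1 * (0 + w_e a b L r s * (- b * ((180 / pi) * (r * (L * cos s - r) / (d_b L r s)\<^sup>2)))))
        / ((1 + w_e a b L r s) * (1 + w_e a b L r s)) * d_b L r s powr xi = (d_b L r s powr xi * (1 / (1 + w_e a b L r s)) * r / (d_b L r s)\<^sup>2) *
      (xi * L * sin s + b * (180 / pi) * w_e a b L r s / (1 + w_e a b L r s) * (L * cos s - r))"
    by (rule alg3[OF d W])
  from D[unfolded eq] show ?thesis unfolding F_e_def q_e_def pb_w .
qed

lemma alg4: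
  fixes L r c c0 :: real
  assumes "0 < r" "r < L" "r < L * c" "c \<le> c0" "c0 \<le> 1"
  shows "(1 - c0\<^sup>2) * (L\<^sup>2 + r\<^sup>2 - 2 * r * L * c) \<le> (1 - c\<^sup>2) * (L\<^sup>2 + r\<^sup>2 - 2 * r * L * c0)"
proof -
  have e: "(1 - c\<^sup>2) * (L\<^sup>2 + r\<^sup>2 - 2 * r * L * c0) - (1 - c0\<^sup>2) * (L\<^sup>2 + r\<^sup>2 - 2 * r * L * c)
      = (c0 - c) * (c0 * (L\<^sup>2 + r\<^sup>2 - 2 * r * L * c) + (L\<^sup>2 + r\<^sup>2) * c - 2 * r * L)"
    by (simp add: algebra_simps power2_eq_square)
  have c1: "c \<le> 1" using assms by linarith
  have k: "L\<^sup>2 + r\<^sup>2 - 2 * r * L * c \<ge> 0"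
  proof -
    have "2 * r * L * c \<le> 2 * r * L" using c1 assms by simp
    moreover have "2 * r * L \<le> L\<^sup>2 + r\<^sup>2" using sum_squares_bound[of L r] by (simp add: ac_simps)
    ultimately show ?thesis by linarith
  qed
  have "c0 * (L\<^sup>2 + r\<^sup>2 - 2 * r * L * c) \<ge> c * (L\<^sup>2 + r\<^sup>2 - 2 * r * L * c)"
    using mult_right_mono[OF assms(4) k] .
  moreover have "c * (L\<^sup>2 + r\<^sup>2 - 2 * r * L * c) + (L\<^sup>2 + r\<^sup>2) * c - 2 * r * L = 2 * (L - r * c) * (L * c - r)"
    by (simp add: algebra_simps power2_eq_square)
  moreover have "L - r * c > 0"
  proof -
    have "r * c \<le> r" using c1 assms by simp
    then show ?thesis using assms by linarith
  qed
  moreover have "L * c - r > 0" using assms by linarith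
  ultimately have "c0 * (L\<^sup>2 + r\<^sup>2 - 2 * r * L * c) + (L\<^sup>2 + r\<^sup>2) * c - 2 * r * L \<ge> 0"
    by (smt (verit) mult_pos_pos)
  moreover have "c0 - c \<ge> 0" using assms by simp
  ultimately have "(1 - c\<^sup>2) * (L\<^sup>2 + r\<^sup>2 - 2 * r * L * c0) - (1 - c0\<^sup>2) * (L\<^sup>2 + r\<^sup>2 - 2 * r * L * c) \<ge> 0"
    unfolding e by simp
  then show ?thesis by simp
qed

lemma phi_mono:
  assumes "0 < r" "r < L" "0 \<le> s0" "s0 \<le> s" "s \<le> pi / 2" "r < L * cos s"
  shows "phi_e L r s0 \<le> phi_e L r s"
proof -
  have c: "cos s \<le> cos s0" by (rule cos_monotone_0_pi_le) (use assms in auto)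
  have d0: "d_b L r s0 > 0" and d: "d_b L r s > 0" using db_pos assms by blast+
  have sn0: "sin s0 \<ge> 0" by (rule sin_ge_zero) (use assms in auto)
  have sn: "sin s \<ge> 0" by (rule sin_ge_zero) (use assms in auto)
  have "(1 - (cos s0)\<^sup>2) * (L\<^sup>2 + r\<^sup>2 - 2 * r * L * cos s) \<le> (1 - (cos s)\<^sup>2) * (L\<^sup>2 + r\<^sup>2 - 2 * r * L * cos s0)"
    by (rule alg4) (use assms c cos_le_one in auto)
  then have "(sin s0 * d_b L r s)\<^sup>2 \<le> (sin s * d_b L r s0)\<^sup>2"
    unfolding power_mult_distrib db_sq[OF assms(1,2)] sin_squared_eq .
  then have "sin s0 * d_b L r s \<le> sin s * d_b L r s0"
    by (rule power2_le_imp_le) (use sn d0 in simp)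
  then have "sin s0 / d_b L r s0 \<le> sin s / d_b L r s"
    using d0 d by (simp add: divide_simps mult.commute)
  then have z: "r * sin s0 / d_b L r s0 \<le> r * sin s / d_b L r s"
    using assms(1) by (metis mult_left_mono less_imp_le times_divide_eq_right)
  have z1: "-1 < r * sin s0 / d_b L r s0" using z_bound[OF assms(1,2), of s0, unfolded abs_less_iff] by linarith
  have z2: "r * sin s / d_b L r s < 1" using z_bound[OF assms(1,2), of s, unfolded abs_less_iff] by linarith
  show ?thesis unfolding phi_e_def
    by (rule arcsin_le_arcsin) (use z z1 z2 in auto)
qed

lemma q_nonneg: "0 < a \<Longrightarrow> 0 < b \<Longrightarrow> 0 \<le> q_e a b L r s"
  unfolding q_e_def w_e_def by (simp add: pos_add_strict)

lemma q_anti: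
  assumes "0 < a" "0 < b" "phi_e L r s0 \<le> phi_e L r s"
  shows "q_e a b L r s \<le> q_e a b L r s0"
proof -
  have "(180 / pi) * phi_e L r s0 \<le> (180 / pi) * phi_e L r s"
    by (rule mult_left_mono) (use assms in auto)
  then have "- b * ((180 / pi) * phi_e L r s - a) \<le> - b * ((180 / pi) * phi_e L r s0 - a)"
    using assms by (simp only: mult_minus_left neg_le_iff_le) (rule mult_left_mono, auto)
  then have w: "w_e a b L r s \<le> w_e a b L r s0" unfolding w_e_def using assms by simp
  have p: "0 < w_e a b L r s" "0 < w_e a b L r s0" unfolding w_e_def using assms by simp_all
  have "w_e a b L r s / (1 + w_e a b L r s) \<le> w_e a b L r s0 / (1 + w_e a b L r s0)"
    using w p by (simp add: divide_simps algebra_simps)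
  then show ?thesis unfolding q_e_def using assms
    by (metis mult_left_mono less_imp_le times_divide_eq_right mult_pos_pos pi_gt_zero divide_pos_pos zero_less_numeral)
qed

lemma F_prop:
  assumes r: "0 < r" "r < L" and ab: "0 < a" "0 < b" and xi: "xi < 0"
    and s: "0 \<le> s0" "s0 \<le> s" "s \<le> pi / 2" and F0: "F_e a b xi L r s0 \<le> 0"
  shows "F_e a b xi L r s \<le> 0"
proof -
  have sn: "sin s \<ge> 0" by (rule sin_ge_zero) (use s in auto)
  have sn0: "sin s0 \<ge> 0" by (rule sin_ge_zero) (use s in auto)
  have L0: "L > 0" using r by simp
  have t1: "xi * L * sin s \<le> 0"
  proof -
    have "L * sin s \<ge> 0" using L0 sn by simp
    then have "xi * (L * sin s) \<le> 0" using xi by (simp add: mult_nonpos_nonneg)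
    then show ?thesis by (simp add: mult.assoc)
  qed
  have q: "q_e a b L r s \<ge> 0" using q_nonneg ab by blast
  show ?thesis
  proof (cases "L * cos s \<le> r")
    case True
    then have "q_e a b L r s * (L * cos s - r) \<le> 0" using q by (simp add: mult_nonneg_nonpos)
    then show ?thesis unfolding F_e_def using t1 by linarith
  next
    case False
    then have A: "L * cos s - r > 0" by simp
    have c: "cos s \<le> cos s0" by (rule cos_monotone_0_pi_le) (use s in auto)
    then have A0: "L * cos s - r \<le> L * cos s0 - r" using L0 by simp
    have sm: "sin s0 \<le> sin s" by (rule sin_monotone_2pi_le) (use s in auto)
    have qq: "q_e a b L r s \<le> q_e a b L r s0"
      by (rule q_anti[OF ab phi_mono]) (use r s False in auto)
    define A1 where "A1 = L * cos s - r"
    define A2 where "A2 = L * cos s0 - r"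
    define q1 where "q1 = q_e a b L r s"
    define q0 where "q0 = q_e a b L r s0"
    define m where "m = - xi * L * sin s0"
    have m0: "m \<ge> 0"
    proof -
      have "- xi * L \<ge> 0" using xi L0 by (simp add: mult_nonpos_nonneg)
      then show ?thesis unfolding m_def using sn0 by (simp only: mult_nonneg_nonneg)
    qed
    have F0': "q0 * A2 \<le> m" using F0 unfolding F_e_def q0_def A2_def m_def by simp
    have "q1 * A1 \<le> q0 * A1" using qq A unfolding q1_def q0_def A1_def by (simp add: mult_right_mono)
    moreover have "q0 * A1 \<le> m"
    proof -
      have "q0 * A1 * A2 = (q0 * A2) * A1" by simp
      also have "... \<le> m * A1" using F0' A unfolding A1_def by (simp add: mult_right_mono)
      also have "... \<le> m * A2" using A0 m0 unfolding A1_def A2_def by (simp add: mult_left_mono)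
      finally have "(q0 * A1) * A2 \<le> m * A2" .
      moreover have "A2 > 0" using A A0 unfolding A2_def by linarith
      ultimately show ?thesis by simp
    qed
    moreover have "m \<le> - xi * L * sin s"
    proof -
      have "- xi * L \<ge> 0" using xi L0 by (simp add: mult_nonpos_nonneg)
      then show ?thesis unfolding m_def using mult_left_mono[OF sm, of "- xi * L"] by simp
    qed
    ultimately have "q1 * A1 \<le> - xi * L * sin s" by linarith
    then show ?thesis unfolding F_e_def q1_def A1_def by simp
  qed
qed

lemma K_pos:
  assumes "0 < r" "r < L" "0 < a"
  shows "0 < d_b L r s powr xi * p_b a b L r s * r / (d_b L r s)\<^sup>2"
proof -
  have d: "d_b L r s > 0" using db_pos assms by blast
  have "w_e a b L r s > 0" unfolding w_e_def using assms by simp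
  then have "p_b a b L r s > 0" unfolding pb_w by simp
  then show ?thesis using d assms by simp
qed

lemma deriv_sign:
  assumes "0 < r" "r < L" "0 < a"
  obtains K where "K > 0" "((f_gain a b xi L r) has_real_derivative K * F_e a b xi L r s) (at s)"
  using K_pos[OF assms] deriv_f[OF assms] by blast

lemma f_cont: "0 < r \<Longrightarrow> r < L \<Longrightarrow> 0 < a \<Longrightarrow> continuous_on S (f_gain a b xi L r)"
  by (rule DERIV_continuous_on, rule has_field_derivative_at_within, rule deriv_f) auto

lemma f_nonincr:
  assumes r: "0 < r" "r < L" and ab: "0 < a" "0 < b" and xi: "xi < 0"
    and t: "0 \<le> t" "t \<le> pi / 2"
    and tmax: "\<And>y. 0 \<le> y \<Longrightarrow> y \<le> pi / 2 \<Longrightarrow> f_gain a b xi L r y \<le> f_gain a b xi L r t"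
    and s: "t \<le> s1" "s1 \<le> s2" "s2 \<le> pi / 2"
  shows "f_gain a b xi L r s2 \<le> f_gain a b xi L r s1"
proof (cases "t < pi / 2")
  case False
  then have "s1 = s2" using s t by linarith
  then show ?thesis by simp
next
  case True
  have Ft: "F_e a b xi L r t \<le> 0"
  proof (rule ccontr)
    assume "\<not> ?thesis"
    then have Fp: "F_e a b xi L r t > 0" by simp
    obtain K where K: "K > 0" "((f_gain a b xi L r) has_real_derivative K * F_e a b xi L r t) (at t)"
      using deriv_sign[OF r ab(1)] by blast
    obtain d where d: "d > 0" "\<And>h. h > 0 \<Longrightarrow> h < d \<Longrightarrow> f_gain a b xi L r t < f_gain a b xi L r (t + h)"
      using DERIV_pos_inc_right[OF K(2)] K(1) Fp by (metis mult_pos_pos)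
    define h where "h = min (d / 2) ((pi / 2 - t) / 2)"
    have h1: "h \<le> (pi / 2 - t) / 2" unfolding h_def by (rule min.cobounded2)
    have h2: "h > 0" "h < d" unfolding h_def using d True by auto
    have h3: "t + h \<le> pi / 2"
    proof -
      have "t + h \<le> t + (pi / 2 - t) / 2" using h1 by simp
      also have "... \<le> pi / 2" using True by (simp add: field_simps)
      finally show ?thesis .
    qed
    note h = h2 h3
    have "f_gain a b xi L r t < f_gain a b xi L r (t + h)" using d(2) h by blast
    moreover have "f_gain a b xi L r (t + h) \<le> f_gain a b xi L r t" using tmax h t by simp
    ultimately show False by simp
  qed
  show ?thesis
  proof (rule DERIV_nonpos_imp_nonincreasing[OF s(2)])
    fix x assume x: "s1 \<le> x" "x \<le> s2"
    obtain K where K: "K > 0" "((f_gain a b xi L r) has_real_derivative K * F_e a b xi L r x) (at x)"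
      using deriv_sign[OF r ab(1)] by blast
    have "F_e a b xi L r x \<le> 0" by (rule F_prop[OF r ab xi t(1) _ _ Ft]) (use x s in auto)
    then have "K * F_e a b xi L r x \<le> 0" using K(1) by (simp add: mult_nonneg_nonpos)
    then show "\<exists>y. ((f_gain a b xi L r) has_real_derivative y) (at x) \<and> y \<le> 0" using K(2) by blast
  qed
qed

lemma f_nondecr:
  assumes r: "0 < r" "r < L" and ab: "0 < a" "0 < b" and xi: "xi < 0"
    and t: "0 \<le> t" "t \<le> pi / 2"
    and tmax: "\<And>y. 0 \<le> y \<Longrightarrow> y \<le> pi / 2 \<Longrightarrow> f_gain a b xi L r y \<le> f_gain a b xi L r t"
    and tuniq: "\<And>y. 0 \<le> y \<Longrightarrow> y \<le> pi / 2 \<Longrightarrow> f_gain a b xi L r y \<ge> f_gain a b xi L r t \<Longrightarrow> y = t"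
    and s: "0 \<le> s1" "s1 \<le> s2" "s2 \<le> t"
  shows "f_gain a b xi L r s1 \<le> f_gain a b xi L r s2"
proof (rule DERIV_nonneg_imp_increasing_open[OF s(2) _ f_cont[OF r ab(1)]])
  fix x assume x: "s1 < x" "x < s2"
  obtain K where K: "K > 0" "((f_gain a b xi L r) has_real_derivative K * F_e a b xi L r x) (at x)"
    using deriv_sign[OF r ab(1)] by blast
  have "F_e a b xi L r x \<ge> 0"
  proof (rule ccontr)
    assume "\<not> ?thesis"
    then have Fx: "F_e a b xi L r x \<le> 0" by simp
    have "f_gain a b xi L r t \<le> f_gain a b xi L r x"
    proof (rule DERIV_nonpos_imp_nonincreasing[of x t "f_gain a b xi L r"])
      show "x \<le> t" using x s by simp
    next
      fix y assume y: "x \<le> y" "y \<le> t"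
      obtain K' where K': "K' > 0" "((f_gain a b xi L r) has_real_derivative K' * F_e a b xi L r y) (at y)"
        using deriv_sign[OF r ab(1)] by blast
      have "F_e a b xi L r y \<le> 0" by (rule F_prop[OF r ab xi _ _ _ Fx]) (use x y s t in auto)
      then have "K' * F_e a b xi L r y \<le> 0" using K'(1) by (simp add: mult_nonneg_nonpos)
      then show "\<exists>z. ((f_gain a b xi L r) has_real_derivative z) (at y) \<and> z \<le> 0" using K'(2) by blast
    qed
    then have "x = t" using tuniq x s t by simp
    then show False using x s by simp
  qed
  then have "K * F_e a b xi L r x \<ge> 0" using K(1) by simp
  then show "\<exists>y. ((f_gain a b xi L r) has_real_derivative y) (at x) \<and> y \<ge> 0" using K(2) by blast
qed

lemma logistic_mono:
  fixes a b x y :: real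
  assumes "0 < a" "0 < b" "x \<le> y"
  shows "1 / (1 + a * exp (- b * ((180 / pi) * x - a))) \<le> 1 / (1 + a * exp (- b * ((180 / pi) * y - a)))"
proof -
  have "(180 / pi) * x \<le> (180 / pi) * y" by (rule mult_left_mono) (use assms in auto)
  then have "- b * ((180 / pi) * y - a) \<le> - b * ((180 / pi) * x - a)"
    using assms by (simp only: mult_minus_left neg_le_iff_le) (rule mult_left_mono, auto)
  then have "a * exp (- b * ((180 / pi) * y - a)) \<le> a * exp (- b * ((180 / pi) * x - a))"
    using assms by simp
  moreover have "0 < 1 + a * exp (- b * ((180 / pi) * y - a))" using assms by (simp add: pos_add_strict)
  ultimately show ?thesis by (simp add: frac_le)
qed

lemma pb_pos: "0 < a \<Longrightarrow> 0 < p_b a b L r s"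
  unfolding p_b_def by (simp add: pos_add_strict)

lemma f_pos: "0 < r \<Longrightarrow> r < L \<Longrightarrow> 0 < a \<Longrightarrow> 0 < f_gain a b xi L r s"
  unfolding f_gain_def using db_pos[of r L s] pb_pos[of a b L r s] by simp

lemma pb_mono_arg:
  assumes "0 < a" "0 < b" "-1 \<le> z1" "z2 \<le> 1" "z1 \<le> z2"
    "z1 = dw * sin th / d_b L dw th" "z2 = r * sin t / d_b L r t"
  shows "p_b a b L dw th \<le> p_b a b L r t"
proof -
  have "arcsin z1 \<le> arcsin z2" by (rule arcsin_le_arcsin) (use assms in auto)
  then show ?thesis unfolding p_b_def using logistic_mono[OF assms(1,2)] assms(6,7) by simp
qed

lemma f_dw_mono:
  assumes "0 < dw" "dw \<le> r" "r < L" "0 \<le> th" "th \<le> pi / 2" "r \<le> L * cos th" "0 < a" "0 < b" "xi < 0"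
  shows "f_gain a b xi L dw th \<le> f_gain a b xi L r th"
proof -
  have r0: "0 < r" using assms by simp
  have d1: "d_b L dw th > 0" using db_pos[OF assms(1) le_less_trans[OF assms(2,3)]] .
  have d2: "d_b L r th > 0" using db_pos[OF r0 assms(3)] .
  have sn: "sin th \<ge> 0" by (rule sin_ge_zero) (use assms in auto)
  have "(d_b L r th)\<^sup>2 \<le> (d_b L dw th)\<^sup>2"
  proof -
    have "(L\<^sup>2 + r\<^sup>2 - 2 * r * L * cos th) - (L\<^sup>2 + dw\<^sup>2 - 2 * dw * L * cos th) = (r - dw) * (r + dw - 2 * L * cos th)"
      by (simp add: algebra_simps power2_eq_square)
    moreover have "(r - dw) * (r + dw - 2 * L * cos th) \<le> 0"
      using assms by (intro mult_nonneg_nonpos) auto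
    ultimately show ?thesis unfolding db_sq[OF r0 assms(3)] db_sq[OF assms(1) le_less_trans[OF assms(2,3)]] by linarith
  qed
  then have dle: "d_b L r th \<le> d_b L dw th" by (rule power2_le_imp_le) (use d1 in simp)
  have E: "d_b L dw th powr xi \<le> d_b L r th powr xi"
    by (rule powr_mono2') (use assms d2 dle in auto)
  have z: "dw * sin th / d_b L dw th \<le> r * sin th / d_b L r th"
  proof -
    have "dw * sin th / d_b L dw th \<le> r * sin th / d_b L dw th"
      by (rule divide_right_mono[OF mult_right_mono[OF assms(2) sn]]) (use d1 in linarith)
    also have "... \<le> r * sin th / d_b L r th"
      by (rule frac_le[OF _ order.refl d2 dle]) (use sn r0 in simp)
    finally show ?thesis .
  qed
  have p: "p_b a b L dw th \<le> p_b a b L r th"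
    by (rule pb_mono_arg[OF assms(7,8) _ _ z refl refl])
       (use z_bound[OF assms(1) le_less_trans[OF assms(2,3)], of th, unfolded abs_less_iff]
          z_bound[OF r0 assms(3), of th, unfolded abs_less_iff] in linarith)+
  show ?thesis unfolding f_gain_def
    by (rule mult_mono[OF E p]) (use d2 pb_pos[of a b L dw th] assms in auto)
qed

lemma f_tangent:
  assumes "0 < dw" "dw \<le> r" "r < L" "L * cos th < r" "0 < a" "0 < b" "xi < 0"
  shows "f_gain a b xi L dw th \<le> f_gain a b xi L r (arccos (r / L))"
proof -
  have r0: "0 < r" using assms by simp
  have L0: "0 < L" using assms by simp
  define tc where "tc = arccos (r / L)"
  have rl0: "0 \<le> r / L" using r0 L0 by simp
  have rl: "-1 \<le> r / L" "r / L \<le> 1" using rl0 assms L0 by (linarith, simp)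
  have ctc: "cos tc = r / L" unfolding tc_def using rl by simp
  have stc: "sin tc = sqrt (1 - (r / L)\<^sup>2)" unfolding tc_def by (rule sin_arccos[OF rl])
  have dw1: "dw < L" using assms by simp
  have d1: "d_b L dw th > 0" using db_pos[OF assms(1) dw1] .
  have d2: "d_b L r tc > 0" using db_pos[OF r0 assms(3)] .
  have sq2: "(d_b L r tc)\<^sup>2 = L\<^sup>2 - r\<^sup>2" unfolding db_sq[OF r0 assms(3)] ctc using L0 by (simp add: power2_eq_square)
  have sq1: "(d_b L dw th)\<^sup>2 = L\<^sup>2 + dw\<^sup>2 - 2 * dw * L * cos th" using db_sq[OF assms(1) dw1] .
  have "(d_b L r tc)\<^sup>2 \<le> (d_b L dw th)\<^sup>2"
  proof -
    have "dw * (L * cos th) \<le> dw * r" using assms by (simp add: mult_left_mono)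
    then have h1: "2 * dw * L * cos th \<le> 2 * dw * r" by (simp add: algebra_simps)
    have h2: "0 \<le> dw\<^sup>2 + r\<^sup>2 - 2 * dw * r" using zero_le_power2[of "dw - r"] unfolding power2_diff by linarith
    show ?thesis unfolding sq1 sq2 using h1 h2 by linarith
  qed
  then have dle: "d_b L r tc \<le> d_b L dw th" by (rule power2_le_imp_le) (use d1 in simp)
  have E: "d_b L dw th powr xi \<le> d_b L r tc powr xi"
    by (rule powr_mono2') (use assms d2 dle in auto)
  have z2: "r * sin tc / d_b L r tc = r / L"
  proof -
    have "1 - (r / L)\<^sup>2 = (L\<^sup>2 - r\<^sup>2) / L\<^sup>2" using L0 by (simp add: field_simps)
    then have "sqrt (1 - (r / L)\<^sup>2) = sqrt (L\<^sup>2 - r\<^sup>2) / L" using L0 by (simp add: real_sqrt_divide)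
    moreover have "d_b L r tc = sqrt (L\<^sup>2 - r\<^sup>2)" using real_sqrt_unique[OF sq2] d2 by simp
    ultimately show ?thesis unfolding stc using d2 L0 by simp
  qed
  have z1: "dw * sin th / d_b L dw th \<le> r / L"
  proof -
    have "L * (dw * sin th) \<le> r * d_b L dw th"
    proof (cases "dw * sin th \<le> 0")
      case True
      then have "L * (dw * sin th) \<le> 0" using L0 by (simp add: mult_nonneg_nonpos)
      moreover have "0 < r * d_b L dw th" using r0 d1 by simp
      ultimately show ?thesis by linarith
    next
      case False
      have "r\<^sup>2 * (d_b L dw th)\<^sup>2 - L\<^sup>2 * (dw * sin th)\<^sup>2 = (L * dw * cos th - r\<^sup>2)\<^sup>2 + (r\<^sup>2 - dw\<^sup>2) * (L\<^sup>2 - r\<^sup>2)"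
        unfolding sq1 power_mult_distrib sin_squared_eq by (simp add: algebra_simps power2_eq_square)
      moreover have "(r\<^sup>2 - dw\<^sup>2) * (L\<^sup>2 - r\<^sup>2) \<ge> 0"
      proof -
        have "dw\<^sup>2 \<le> r\<^sup>2" using assms by (simp add: power_mono)
        moreover have "r\<^sup>2 \<le> L\<^sup>2" using assms r0 by (simp add: power_mono)
        ultimately show ?thesis by simp
      qed
      moreover have "0 \<le> (L * dw * cos th - r\<^sup>2)\<^sup>2" by simp
      ultimately have "L\<^sup>2 * (dw * sin th)\<^sup>2 \<le> r\<^sup>2 * (d_b L dw th)\<^sup>2" by linarith
      then have "(L * (dw * sin th))\<^sup>2 \<le> (r * d_b L dw th)\<^sup>2"
        by (simp only: power_mult_distrib)
      then show ?thesis by (rule power2_le_imp_le) (use r0 d1 in simp)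
    qed
    then have "L * (dw * sin th) / (L * d_b L dw th) \<le> r * d_b L dw th / (L * d_b L dw th)"
      by (rule divide_right_mono) (use L0 d1 in simp)
    then show ?thesis using L0 d1 by simp
  qed
  have p: "p_b a b L dw th \<le> p_b a b L r tc"
    by (rule pb_mono_arg[OF assms(5,6) _ _ _ refl refl])
       (use z1 z2 z_bound[OF assms(1) dw1, of th, unfolded abs_less_iff]
          z_bound[OF r0 assms(3), of tc, unfolded abs_less_iff] in linarith)+
  show ?thesis unfolding f_gain_def tc_def[symmetric]
    by (rule mult_mono[OF E p]) (use d2 pb_pos[of a b L dw th] assms in auto)
qed

lemma dom:
  assumes "0 < dw" "dw \<le> r" "r < L" "0 < thlo" "thlo \<le> th" "th \<le> pi / 2" "r \<le> L * cos thlo"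
    "0 < a" "0 < b" "xi < 0"
  shows "\<exists>s. thlo \<le> s \<and> s \<le> th \<and> f_gain a b xi L dw th \<le> f_gain a b xi L r s"
proof (cases "r \<le> L * cos th")
  case True
  then show ?thesis using f_dw_mono[of dw r L th a b xi] assms by auto
next
  case False
  have L0: "0 < L" using assms by simp
  have rl0: "0 \<le> r / L" using assms L0 by simp
  have rl: "-1 \<le> r / L" "r / L \<le> 1" using rl0 assms L0 by (linarith, simp)
  have c1: "cos thlo \<le> 1" by simp
  have "arccos (cos thlo) \<le> arccos (r / L)"
    by (rule arccos_le_arccos) (use assms L0 in \<open>auto simp: field_simps\<close>)
  then have g1: "thlo \<le> arccos (r / L)" using assms by (simp add: arccos_cos)
  have "arccos (r / L) \<le> arccos (cos th)"
    by (rule arccos_le_arccos) (use assms False L0 in \<open>auto simp: field_simps\<close>)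
  then have g2: "arccos (r / L) \<le> th" using assms by (simp add: arccos_cos)
  show ?thesis using f_tangent[of dw r L th a b xi] assms False g1 g2 by auto
qed

definition hh :: "real \<Rightarrow> real \<Rightarrow> real \<Rightarrow> real \<Rightarrow> real \<Rightarrow> real \<Rightarrow> real" where
  "hh a b xiL xiN dw th = dw powr xiL * p_w a b th + dw powr xiN"

definition Dg :: "nat \<Rightarrow> real \<Rightarrow> real \<Rightarrow> real" where
  "Dg n sw2 Q = real n / 2 * (ln ((Q + sw2) / sw2) - Q / (Q + sw2))"

lemma D_eq: "D01 a b xiL xiN sw2 n P dw th = Dg n sw2 (P * hh a b xiL xiN dw th)"
  unfolding D01_def Pbar_def hh_def Dg_def Let_def by (simp add: algebra_simps)

lemma ln_ge_1_minus_inv: "0 < (x::real) \<Longrightarrow> 1 - 1 / x \<le> ln x"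
  using ln_le_minus_one[of "1 / x"] by (simp add: ln_div)

lemma Dg_strict:
  assumes n: "1 \<le> n" and s: "0 < sw2" and q: "0 < Q1" "Q1 < Q2"
  shows "Dg n sw2 Q1 < Dg n sw2 Q2"
proof -
  have a1: "0 < Q1 + sw2" "0 < Q2 + sw2" using s q by auto
  have "ln ((Q2 + sw2) / sw2) - ln ((Q1 + sw2) / sw2) = ln ((Q2 + sw2) / (Q1 + sw2))"
    using a1 s by (simp add: ln_div)
  also have "... \<ge> 1 - 1 / ((Q2 + sw2) / (Q1 + sw2))"
    by (rule ln_ge_1_minus_inv) (use a1 in simp)
  finally have l: "ln ((Q2 + sw2) / sw2) - ln ((Q1 + sw2) / sw2) \<ge> (Q2 - Q1) / (Q2 + sw2)"
    using a1 by (simp add: field_simps)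
  have e: "Q2 / (Q2 + sw2) - Q1 / (Q1 + sw2) = sw2 * (Q2 - Q1) / ((Q1 + sw2) * (Q2 + sw2))"
    using a1 by (simp add: field_simps)
  have "sw2 * (Q2 - Q1) / ((Q1 + sw2) * (Q2 + sw2)) < (Q1 + sw2) * (Q2 - Q1) / ((Q1 + sw2) * (Q2 + sw2))"
    by (rule divide_strict_right_mono) (use q a1 s in simp_all)
  also have "... = (Q2 - Q1) / (Q2 + sw2)" using a1 by simp
  finally have "Q2 / (Q2 + sw2) - Q1 / (Q1 + sw2) < (Q2 - Q1) / (Q2 + sw2)" unfolding e .
  with l have "ln ((Q1 + sw2) / sw2) - Q1 / (Q1 + sw2) < ln ((Q2 + sw2) / sw2) - Q2 / (Q2 + sw2)" by linarith
  moreover have "real n / 2 > 0" using n by simp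
  ultimately show ?thesis unfolding Dg_def by (rule mult_strict_left_mono)
qed

lemma Dg_le_iff:
  assumes "1 \<le> n" "0 < sw2" "0 < Q1" "0 < Q2"
  shows "Dg n sw2 Q1 \<le> Dg n sw2 Q2 \<longleftrightarrow> Q1 \<le> Q2"
proof
  assume "Dg n sw2 Q1 \<le> Dg n sw2 Q2"
  then show "Q1 \<le> Q2" using Dg_strict[OF assms(1,2,4), of Q1] by (cases "Q2 < Q1") auto
next
  assume "Q1 \<le> Q2"
  then show "Dg n sw2 Q1 \<le> Dg n sw2 Q2" using Dg_strict[OF assms(1,2,3), of Q2] by (cases "Q1 = Q2") auto
qed

lemma pw_pos: "0 < a \<Longrightarrow> 0 < p_w a b th"
  unfolding p_w_def by (simp add: pos_add_strict)

lemma hh_pos: "0 < a \<Longrightarrow> 0 < dw \<Longrightarrow> 0 < hh a b xiL xiN dw th"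
  unfolding hh_def using pw_pos[of a b th] by (simp add: pos_add_strict)

lemma hh_mono:
  assumes "0 < a" "0 < b" "xiL < 0" "xiN < 0" "0 < dw" "dw \<le> r" "t1 \<le> t2"
  shows "hh a b xiL xiN r t1 \<le> hh a b xiL xiN dw t2"
proof -
  have p: "p_w a b t1 \<le> p_w a b t2" unfolding p_w_def by (rule logistic_mono) (use assms in auto)
  have e1: "r powr xiL \<le> dw powr xiL" by (rule powr_mono2') (use assms in auto)
  have e2: "r powr xiN \<le> dw powr xiN" by (rule powr_mono2') (use assms in auto)
  have "r powr xiL * p_w a b t1 \<le> dw powr xiL * p_w a b t2"
    by (rule mult_mono[OF e1 p]) (use pw_pos[OF assms(1), of b t1] in auto)
  then show ?thesis unfolding hh_def using e2 by linarith
qed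

theorem proposition1:
  fixes L a b xiL xiN sb2 sw2 eps Pm dlo dhi thlo thO :: real
    and n :: nat
  defines "G \<equiv> gamma_b a b xiL L sb2"
      and "D \<equiv> D01 a b xiL xiN sw2 n"
  assumes L_pos: "L > 0"
      and xi: "xiL < 0" "xiN < 0"
      and ab: "a > 0" "b > 0"
      and sig: "sb2 > 0" "sw2 > 0"
      and n_pos: "n \<ge> 1"
      and eps_pos: "eps > 0"
      and Pm_pos: "Pm > 0"
      and thlo: "0 < thlo" "thlo < pi / 2"
      and dbnd: "0 < dlo" "dlo < dhi" "dhi \<le> L * cos thlo" "L * cos thlo < L / cos thlo"
      \<comment> \<open>thO = theta_w^o(dhi): the unique unconstrained maximizer over [0, pi/2],
          for every P > 0\<close>
      and thO_range: "0 \<le> thO" "thO \<le> pi / 2"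
      and thO_max: "\<And>P th. P > 0 \<Longrightarrow> 0 \<le> th \<Longrightarrow> th \<le> pi / 2 \<Longrightarrow> G P dhi th \<le> G P dhi thO"
      and thO_uniq: "\<And>P th. P > 0 \<Longrightarrow> 0 \<le> th \<Longrightarrow> th \<le> pi / 2 \<Longrightarrow>
                        G P dhi th \<ge> G P dhi thO \<Longrightarrow> th = thO"
  shows
    "let feas = (\<lambda>P dw th. D P dw th \<le> 2 * eps\<^sup>2 \<and> 0 < P \<and> P \<le> Pm \<and>
                   dlo \<le> dw \<and> dw \<le> dhi \<and> thlo \<le> th \<and> th \<le> pi / 2);
         opt = (\<lambda>dw th P. feas P dw th \<and>
                   (\<forall>P' dw' th'. feas P' dw' th' \<longrightarrow> G P' dw' th' \<le> G P dw th))
     in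
     \<comment> \<open>(A)\<close>
     ((thO < thlo \<and> D Pm dhi thlo \<le> 2 * eps\<^sup>2) \<longrightarrow> opt dhi thlo Pm) \<and>
     \<comment> \<open>(B): Peps is the unique P > 0 with D(P, dhi, thlo) = 2 eps^2\<close>
     ((thO < thlo \<and> D Pm dhi thlo > 2 * eps\<^sup>2) \<longrightarrow>
        (\<forall>Peps. 0 < Peps \<and> D Peps dhi thlo = 2 * eps\<^sup>2 \<and>
           (\<forall>P. 0 < P \<and> D P dhi thlo = 2 * eps\<^sup>2 \<longrightarrow> P = Peps)
           \<longrightarrow> opt dhi thlo Peps)) \<and>
     \<comment> \<open>(C)\<close>
     ((thlo \<le> thO \<and> thO \<le> arccos (dhi / L) \<and> D Pm dhi thO \<le> 2 * eps\<^sup>2) \<longrightarrow>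
        opt dhi thO Pm) \<and>
     \<comment> \<open>(D): theps is the unique solution in [0, pi/2] of D(Pm, dhi, th) = 2 eps^2, and
          (Pj, thj) is the unique maximizer of the reduced problem\<close>
     ((thlo \<le> thO \<and> thO \<le> arccos (dhi / L) \<and> D Pm dhi thO > 2 * eps\<^sup>2) \<longrightarrow>
        (\<forall>theps Pj thj.
           (0 \<le> theps \<and> theps \<le> pi / 2 \<and> D Pm dhi theps = 2 * eps\<^sup>2 \<and>
            (\<forall>th. 0 \<le> th \<and> th \<le> pi / 2 \<and> D Pm dhi th = 2 * eps\<^sup>2 \<longrightarrow> th = theps)) \<longrightarrow>
           (let feasj = (\<lambda>P th. D P dhi th = 2 * eps\<^sup>2 \<and> P \<le> Pm \<and>
                            max thlo theps \<le> th \<and> th \<le> thO)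
            in feasj Pj thj \<and>
               (\<forall>P th. feasj P th \<longrightarrow> G P dhi th \<le> G Pj dhi thj) \<and>
               (\<forall>P th. feasj P th \<and> G P dhi th \<ge> G Pj dhi thj \<longrightarrow> P = Pj \<and> th = thj))
           \<longrightarrow> opt dhi thj Pj))"
proof -
  define eps2 where "eps2 = 2 * eps\<^sup>2"
  define f where "f = f_gain a b xiL L"
  define h where "h = hh a b xiL xiN"
  have Geq: "\<And>P dw th. G P dw th = P * f dw th / sb2" unfolding G_def gamma_b_def f_def by simp
  have Deq: "\<And>P dw th. D P dw th = Dg n sw2 (P * h dw th)" unfolding D_def h_def by (rule D_eq)
  have L0: "0 < L" by (rule L_pos)
  have cl: "cos thlo < 1" using cos_monotone_0_pi[of 0 thlo] thlo by simp
  have dhi0: "0 < dhi" using dbnd by simp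
  have dhiL: "dhi < L"
  proof -
    have "L * cos thlo < L * 1" using cl L0 by (intro mult_strict_left_mono) auto
    then show ?thesis using dbnd by simp
  qed
  have fmax: "\<And>y. 0 \<le> y \<Longrightarrow> y \<le> pi / 2 \<Longrightarrow> f dhi y \<le> f dhi thO"
  proof -
    fix y assume "0 \<le> y" "y \<le> pi / 2"
    then have "1 * f dhi y / sb2 \<le> 1 * f dhi thO / sb2" using thO_max[of 1 y] unfolding Geq by simp
    then show "f dhi y \<le> f dhi thO" using sig by (simp add: divide_le_cancel)
  qed
  have funiq: "\<And>y. 0 \<le> y \<Longrightarrow> y \<le> pi / 2 \<Longrightarrow> f dhi y \<ge> f dhi thO \<Longrightarrow> y = thO"
  proof -
    fix y assume y: "0 \<le> y" "y \<le> pi / 2" "f dhi y \<ge> f dhi thO"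
    then have "1 * f dhi y / sb2 \<ge> 1 * f dhi thO / sb2" using sig by (simp add: divide_le_cancel)
    then show "y = thO" using thO_uniq[of 1 y] y unfolding Geq by simp
  qed
  have f_dec: "\<And>s1 s2. thO \<le> s1 \<Longrightarrow> s1 \<le> s2 \<Longrightarrow> s2 \<le> pi / 2 \<Longrightarrow> f dhi s2 \<le> f dhi s1"
    unfolding f_def by (rule f_nonincr[OF dhi0 dhiL ab xi(1) thO_range]) (use fmax in \<open>auto simp: f_def\<close>)
  have f_inc: "\<And>s1 s2. 0 \<le> s1 \<Longrightarrow> s1 \<le> s2 \<Longrightarrow> s2 \<le> thO \<Longrightarrow> f dhi s1 \<le> f dhi s2"
    unfolding f_def by (rule f_nondecr[OF dhi0 dhiL ab xi(1) thO_range]) (use fmax funiq in \<open>auto simp: f_def\<close>)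
  have fpos: "\<And>dw th. 0 < dw \<Longrightarrow> dw < L \<Longrightarrow> 0 < f dw th" unfolding f_def using f_pos ab by blast
  have hpos: "\<And>dw th. 0 < dw \<Longrightarrow> 0 < h dw th" unfolding h_def using hh_pos ab by blast
  have hmono: "\<And>dw t1 t2. 0 < dw \<Longrightarrow> dw \<le> dhi \<Longrightarrow> t1 \<le> t2 \<Longrightarrow> h dhi t1 \<le> h dw t2"
    unfolding h_def using hh_mono ab xi by blast
  have Dle: "\<And>Q1 Q2. 0 < Q1 \<Longrightarrow> 0 < Q2 \<Longrightarrow> Dg n sw2 Q1 \<le> Dg n sw2 Q2 \<longleftrightarrow> Q1 \<le> Q2"
    using Dg_le_iff n_pos sig(2) by blast
  have Gmono: "\<And>P1 P2 f1 f2. 0 < P1 \<Longrightarrow> P1 \<le> P2 \<Longrightarrow> 0 \<le> f1 \<Longrightarrow> f1 \<le> f2 \<Longrightarrow> P1 * f1 / sb2 \<le> P2 * f2 / sb2"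
  proof -
    fix P1 P2 f1 f2 :: real assume "0 < P1" "P1 \<le> P2" "0 \<le> f1" "f1 \<le> f2"
    then have "P1 * f1 \<le> P2 * f2" by (intro mult_mono) auto
    then show "P1 * f1 / sb2 \<le> P2 * f2 / sb2" using sig by (simp add: divide_right_mono)
  qed
  have reduce: "\<And>dw th. dlo \<le> dw \<Longrightarrow> dw \<le> dhi \<Longrightarrow> thlo \<le> th \<Longrightarrow> th \<le> pi / 2 \<Longrightarrow>
      \<exists>s. thlo \<le> s \<and> s \<le> th \<and> f dw th \<le> f dhi s \<and> h dhi s \<le> h dw th"
  proof -
    fix dw th assume a: "dlo \<le> dw" "dw \<le> dhi" "thlo \<le> th" "th \<le> pi / 2"
    have dw0: "0 < dw" using a dbnd by simp
    obtain s where s: "thlo \<le> s" "s \<le> th" "f dw th \<le> f dhi s"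
      using dom[OF dw0 a(2) dhiL thlo(1) a(3) a(4) dbnd(3) ab xi(1)] unfolding f_def by blast
    have "h dhi s \<le> h dw th" using hmono[OF dw0 a(2) s(2)] .
    then show "\<exists>s. thlo \<le> s \<and> s \<le> th \<and> f dw th \<le> f dhi s \<and> h dhi s \<le> h dw th" using s by blast
  qed
  define feas where "feas = (\<lambda>P dw th. D P dw th \<le> 2 * eps\<^sup>2 \<and> 0 < P \<and> P \<le> Pm \<and>
                   dlo \<le> dw \<and> dw \<le> dhi \<and> thlo \<le> th \<and> th \<le> pi / 2)"
  define opt where "opt = (\<lambda>dw th P. feas P dw th \<and>
                   (\<forall>P' dw' th'. feas P' dw' th' \<longrightarrow> G P' dw' th' \<le> G P dw th))"
  have feasE: "\<And>P dw th. feas P dw th \<Longrightarrow> \<exists>s. thlo \<le> s \<and> s \<le> pi / 2 \<and> 0 < P \<and> P \<le> Pm \<and>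
        G P dw th \<le> P * f dhi s / sb2 \<and> Dg n sw2 (P * h dhi s) \<le> eps2"
  proof -
    fix P dw th assume fe: "feas P dw th"
    then have a: "D P dw th \<le> eps2" "0 < P" "P \<le> Pm" "dlo \<le> dw" "dw \<le> dhi" "thlo \<le> th" "th \<le> pi / 2"
      unfolding feas_def eps2_def by auto
    obtain s where s: "thlo \<le> s" "s \<le> th" "f dw th \<le> f dhi s" "h dhi s \<le> h dw th"
      using reduce[OF a(4-7)] by blast
    have dw0: "0 < dw" using a dbnd by simp
    have dwL: "dw < L" using a dhiL by simp
    have "G P dw th \<le> P * f dhi s / sb2" unfolding Geq
      by (rule Gmono[OF a(2) order.refl _ s(3)]) (use fpos[OF dw0 dwL, of th] in auto)
    moreover have "Dg n sw2 (P * h dhi s) \<le> eps2"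
    proof -
      have "P * h dhi s \<le> P * h dw th" using s(4) a(2) by simp
      then have "Dg n sw2 (P * h dhi s) \<le> Dg n sw2 (P * h dw th)"
        using Dle hpos dhi0 dw0 a(2) by simp
      then show ?thesis using a(1) unfolding Deq by simp
    qed
    ultimately show "\<exists>s. thlo \<le> s \<and> s \<le> pi / 2 \<and> 0 < P \<and> P \<le> Pm \<and>
        G P dw th \<le> P * f dhi s / sb2 \<and> Dg n sw2 (P * h dhi s) \<le> eps2" using s a by auto
  qed
  have caseA: "(thO < thlo \<and> D Pm dhi thlo \<le> 2 * eps\<^sup>2) \<longrightarrow> opt dhi thlo Pm"
  proof
    assume hyp: "thO < thlo \<and> D Pm dhi thlo \<le> 2 * eps\<^sup>2"
    have "feas Pm dhi thlo" unfolding feas_def using hyp Pm_pos dbnd thlo by auto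
    moreover have "\<forall>P' dw' th'. feas P' dw' th' \<longrightarrow> G P' dw' th' \<le> G Pm dhi thlo"
    proof (intro allI impI)
      fix P dw th assume "feas P dw th"
      then obtain s where s: "thlo \<le> s" "s \<le> pi / 2" "0 < P" "P \<le> Pm" "G P dw th \<le> P * f dhi s / sb2"
        using feasE by blast
      have fl: "f dhi s \<le> f dhi thlo" by (rule f_dec) (use hyp s in auto)
      have "P * f dhi s / sb2 \<le> Pm * f dhi thlo / sb2"
        by (rule Gmono[OF s(3,4) _ fl]) (use fpos[OF dhi0 dhiL, of s] in auto)
      then show "G P dw th \<le> G Pm dhi thlo" using s(5) unfolding Geq by linarith
    qed
    ultimately show "opt dhi thlo Pm" unfolding opt_def by blast
  qed
  have caseB: "(thO < thlo \<and> D Pm dhi thlo > 2 * eps\<^sup>2) \<longrightarrow>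
        (\<forall>Peps. 0 < Peps \<and> D Peps dhi thlo = 2 * eps\<^sup>2 \<and>
           (\<forall>P. 0 < P \<and> D P dhi thlo = 2 * eps\<^sup>2 \<longrightarrow> P = Peps)
           \<longrightarrow> opt dhi thlo Peps)"
  proof (intro impI allI)
    fix Peps
    assume hyp: "thO < thlo \<and> D Pm dhi thlo > 2 * eps\<^sup>2"
      and pe: "0 < Peps \<and> D Peps dhi thlo = 2 * eps\<^sup>2 \<and> (\<forall>P. 0 < P \<and> D P dhi thlo = 2 * eps\<^sup>2 \<longrightarrow> P = Peps)"
    have h0: "0 < h dhi thlo" using hpos dhi0 by blast
    have Qe: "0 < Peps * h dhi thlo" using pe h0 by simp
    have De: "Dg n sw2 (Peps * h dhi thlo) = eps2" using pe unfolding Deq eps2_def by simp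
    have "Peps \<le> Pm"
    proof (rule ccontr)
      assume "\<not> Peps \<le> Pm"
      then have "Pm * h dhi thlo \<le> Peps * h dhi thlo" using h0 by simp
      then have "Dg n sw2 (Pm * h dhi thlo) \<le> eps2" using Dle[of "Pm * h dhi thlo" "Peps * h dhi thlo"] Qe h0 Pm_pos De by simp
      then show False using hyp unfolding Deq eps2_def by simp
    qed
    then have "feas Peps dhi thlo" unfolding feas_def using pe dbnd thlo by auto
    moreover have "\<forall>P' dw' th'. feas P' dw' th' \<longrightarrow> G P' dw' th' \<le> G Peps dhi thlo"
    proof (intro allI impI)
      fix P dw th assume "feas P dw th"
      then obtain s where s: "thlo \<le> s" "s \<le> pi / 2" "0 < P" "P \<le> Pm" "G P dw th \<le> P * f dhi s / sb2"
          "Dg n sw2 (P * h dhi s) \<le> eps2"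
        using feasE by blast
      have hs: "0 < h dhi s" using hpos dhi0 by blast
      have "P * h dhi s \<le> Peps * h dhi thlo" using Dle[of "P * h dhi s" "Peps * h dhi thlo"] s(3,6) hs Qe De by simp
      moreover have "P * h dhi thlo \<le> P * h dhi s" using hmono[OF dhi0 order.refl s(1)] s(3) by simp
      ultimately have "P * h dhi thlo \<le> Peps * h dhi thlo" by linarith
      then have PP: "P \<le> Peps" using h0 by simp
      have fl: "f dhi s \<le> f dhi thlo" by (rule f_dec) (use hyp s in auto)
      have "P * f dhi s / sb2 \<le> Peps * f dhi thlo / sb2"
        by (rule Gmono[OF s(3) PP _ fl]) (use fpos[OF dhi0 dhiL, of s] in auto)
      then show "G P dw th \<le> G Peps dhi thlo" using s(5) unfolding Geq by linarith
    qed
    ultimately show "opt dhi thlo Peps" unfolding opt_def by blast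
  qed
  have caseC: "(thlo \<le> thO \<and> thO \<le> arccos (dhi / L) \<and> D Pm dhi thO \<le> 2 * eps\<^sup>2) \<longrightarrow> opt dhi thO Pm"
  proof
    assume hyp: "thlo \<le> thO \<and> thO \<le> arccos (dhi / L) \<and> D Pm dhi thO \<le> 2 * eps\<^sup>2"
    have "feas Pm dhi thO" unfolding feas_def using hyp Pm_pos dbnd thO_range by auto
    moreover have "\<forall>P' dw' th'. feas P' dw' th' \<longrightarrow> G P' dw' th' \<le> G Pm dhi thO"
    proof (intro allI impI)
      fix P dw th assume "feas P dw th"
      then obtain s where s: "thlo \<le> s" "s \<le> pi / 2" "0 < P" "P \<le> Pm" "G P dw th \<le> P * f dhi s / sb2"
        using feasE by blast
      have fl: "f dhi s \<le> f dhi thO" by (rule fmax) (use s thlo in auto)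
      have "P * f dhi s / sb2 \<le> Pm * f dhi thO / sb2"
        by (rule Gmono[OF s(3,4) _ fl]) (use fpos[OF dhi0 dhiL, of s] in auto)
      then show "G P dw th \<le> G Pm dhi thO" using s(5) unfolding Geq by linarith
    qed
    ultimately show "opt dhi thO Pm" unfolding opt_def by blast
  qed
  have caseD: "(thlo \<le> thO \<and> thO \<le> arccos (dhi / L) \<and> D Pm dhi thO > 2 * eps\<^sup>2) \<longrightarrow>
        (\<forall>theps Pj thj.
           (0 \<le> theps \<and> theps \<le> pi / 2 \<and> D Pm dhi theps = 2 * eps\<^sup>2 \<and>
            (\<forall>th. 0 \<le> th \<and> th \<le> pi / 2 \<and> D Pm dhi th = 2 * eps\<^sup>2 \<longrightarrow> th = theps)) \<longrightarrow>
           (let feasj = (\<lambda>P th. D P dhi th = 2 * eps\<^sup>2 \<and> P \<le> Pm \<and>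
                            max thlo theps \<le> th \<and> th \<le> thO)
            in feasj Pj thj \<and>
               (\<forall>P th. feasj P th \<longrightarrow> G P dhi th \<le> G Pj dhi thj) \<and>
               (\<forall>P th. feasj P th \<and> G P dhi th \<ge> G Pj dhi thj \<longrightarrow> P = Pj \<and> th = thj))
           \<longrightarrow> opt dhi thj Pj)"
  proof (intro impI allI)
    fix theps Pj thj
    assume hyp: "thlo \<le> thO \<and> thO \<le> arccos (dhi / L) \<and> D Pm dhi thO > 2 * eps\<^sup>2"
      and te: "0 \<le> theps \<and> theps \<le> pi / 2 \<and> D Pm dhi theps = 2 * eps\<^sup>2 \<and>
            (\<forall>th. 0 \<le> th \<and> th \<le> pi / 2 \<and> D Pm dhi th = 2 * eps\<^sup>2 \<longrightarrow> th = theps)"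
      and J: "let feasj = (\<lambda>P th. D P dhi th = 2 * eps\<^sup>2 \<and> P \<le> Pm \<and>
                            max thlo theps \<le> th \<and> th \<le> thO)
            in feasj Pj thj \<and>
               (\<forall>P th. feasj P th \<longrightarrow> G P dhi th \<le> G Pj dhi thj) \<and>
               (\<forall>P th. feasj P th \<and> G P dhi th \<ge> G Pj dhi thj \<longrightarrow> P = Pj \<and> th = thj)"
    have J1: "D Pj dhi thj = eps2" "Pj \<le> Pm" "max thlo theps \<le> thj" "thj \<le> thO"
      using J unfolding Let_def eps2_def by auto
    have J2: "\<And>P th. D P dhi th = eps2 \<Longrightarrow> P \<le> Pm \<Longrightarrow> max thlo theps \<le> th \<Longrightarrow> th \<le> thO \<Longrightarrow>
        G P dhi th \<le> G Pj dhi thj"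
      using J unfolding Let_def eps2_def by blast
    define Qs where "Qs = Pm * h dhi theps"
    have hO: "0 < h dhi thO" using hpos dhi0 by blast
    have he: "0 < h dhi theps" using hpos dhi0 by blast
    have Qs0: "0 < Qs" unfolding Qs_def using he Pm_pos by simp
    have DQs: "Dg n sw2 Qs = eps2" using te unfolding Qs_def Deq eps2_def by simp
    have QO: "Qs < Pm * h dhi thO"
    proof (rule ccontr)
      assume "\<not> ?thesis"
      then have "Dg n sw2 (Pm * h dhi thO) \<le> Dg n sw2 Qs" using Dle[of "Pm * h dhi thO" Qs] hO Pm_pos Qs0 by simp
      then show False using hyp DQs unfolding Deq eps2_def by simp
    qed
    have teO: "theps \<le> thO"
    proof (rule ccontr)
      assume "\<not> ?thesis"
      then have "h dhi thO \<le> h dhi theps" using hmono[OF dhi0 order.refl, of thO theps] by simp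
      then have "Pm * h dhi thO \<le> Qs" unfolding Qs_def using Pm_pos by simp
      then show False using QO by simp
    qed
    define P' where "P' = Qs / h dhi thO"
    have P'0: "0 < P'" unfolding P'_def using Qs0 hO by simp
    have P'm: "P' \<le> Pm" unfolding P'_def using QO hO by (simp add: divide_le_eq)
    have DP': "D P' dhi thO = eps2" unfolding Deq P'_def using hO DQs by simp
    have GO: "G P' dhi thO \<le> G Pj dhi thj"
      by (rule J2[OF DP' P'm]) (use hyp teO in auto)
    have Pj0: "0 < Pj"
    proof (rule ccontr)
      assume "\<not> ?thesis"
      then have "Pj * f dhi thj \<le> 0" using fpos[OF dhi0 dhiL, of thj] by (simp add: mult_nonpos_nonneg)
      then have "G Pj dhi thj \<le> 0" unfolding Geq using sig by (simp add: divide_nonpos_pos)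
      moreover have "0 < G P' dhi thO" unfolding Geq using P'0 fpos[OF dhi0 dhiL, of thO] sig by simp
      ultimately show False using GO by simp
    qed
    have thj2: "thj \<le> pi / 2" using J1 thO_range by simp
    have "feas Pj dhi thj" unfolding feas_def using J1 Pj0 dbnd thj2 unfolding eps2_def by auto
    moreover have "\<forall>P' dw' th'. feas P' dw' th' \<longrightarrow> G P' dw' th' \<le> G Pj dhi thj"
    proof (intro allI impI)
      fix P dw th assume "feas P dw th"
      then obtain s where s: "thlo \<le> s" "s \<le> pi / 2" "0 < P" "P \<le> Pm" "G P dw th \<le> P * f dhi s / sb2"
          "Dg n sw2 (P * h dhi s) \<le> eps2"
        using feasE by blast
      have hs: "0 < h dhi s" using hpos dhi0 by blast
      have PQ: "P * h dhi s \<le> Qs" using Dle[of "P * h dhi s" Qs] s(3,6) hs Qs0 DQs by simp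
      have fs0: "0 \<le> f dhi s" using fpos[OF dhi0 dhiL, of s] by simp
      have "P * f dhi s / sb2 \<le> G Pj dhi thj"
      proof (cases "thO \<le> s")
        case True
        have "h dhi thO \<le> h dhi s" using hmono[OF dhi0 order.refl True] .
        then have "P * h dhi thO \<le> Qs" using PQ s(3) by (smt (verit) mult_left_mono)
        then have PP: "P \<le> P'" unfolding P'_def using hO by (simp add: le_divide_eq)
        have fl: "f dhi s \<le> f dhi thO" by (rule fmax) (use s thlo in auto)
        then have "P * f dhi s / sb2 \<le> P' * f dhi thO / sb2" by (rule Gmono[OF s(3) PP fs0])
        then show ?thesis using GO unfolding Geq by linarith
      next
        case False
        show ?thesis
        proof (cases "theps \<le> s")
          case True
          define P2 where "P2 = Qs / h dhi s"
          have PP: "P \<le> P2" unfolding P2_def using PQ hs by (simp add: le_divide_eq)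
          have P2m: "P2 \<le> Pm"
          proof -
            have "h dhi theps \<le> h dhi s" using hmono[OF dhi0 order.refl True] .
            then have "Qs \<le> Pm * h dhi s" unfolding Qs_def using Pm_pos by simp
            then show ?thesis unfolding P2_def using hs by (simp add: divide_le_eq)
          qed
          have DP2: "D P2 dhi s = eps2" unfolding Deq P2_def using hs DQs by simp
          have G2: "G P2 dhi s \<le> G Pj dhi thj" by (rule J2[OF DP2 P2m]) (use s True False in auto)
          have "P * f dhi s / sb2 \<le> P2 * f dhi s / sb2" by (rule Gmono[OF s(3) PP fs0 order.refl])
          then show ?thesis using G2 unfolding Geq by linarith
        next
          case False2: False
          have "f dhi s \<le> f dhi theps" by (rule f_inc) (use s thlo False2 teO in auto)
          then have "P * f dhi s / sb2 \<le> Pm * f dhi theps / sb2" by (rule Gmono[OF s(3,4) fs0])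
          moreover have "G Pm dhi theps \<le> G Pj dhi thj"
            by (rule J2) (use te s False2 teO in \<open>auto simp: eps2_def\<close>)
          ultimately show ?thesis unfolding Geq by linarith
        qed
      qed
      then show "G P dw th \<le> G Pj dhi thj" using s(5) by linarith
    qed
    ultimately show "opt dhi thj Pj" unfolding opt_def by blast
  qed
  show ?thesis unfolding Let_def using caseA caseB caseC caseD unfolding opt_def feas_def Let_def by blast
qed

end
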